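(* If $G$ is a finite directed acyclic graph, then the complex of directed trees $\mathrm{DT}(G)$ is shellable.
   Context: All graphs are finite and directed. A directed acyclic graph is a directed graph with no directed cycles. A directed forest is a set of edges which, viewed as a graph, is acyclic and has at most one edge directed to each vertex. The complex of directed trees $\mathrm{DT}(G)$ is the simplicial complex whose vertex set is the edge set $E(G)$, a set of edges being a simplex iff it is a directed forest. A simplicial complex $\Delta$ is shellable if its maximal faces can be ordered $F_1,\dots,F_n$ such that for all $1\le i<k\le n$ there exist $1\le j<k$ and $e\in F_k$ with $F_i\cap F_k\subseteq F_j\cap F_k=F_k\setminus\{e\}$. *)

theory Defs
  imports "Graph_Theory.Digraph"
begin

definition directed_forest :: "('a,'b) pre_digraph \<Rightarrow> 'b set \<Rightarrow> bool" where
  "directed_forest G F \<longleftrightarrow>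
     acyclic ((\<lambda>e. (tail G e, head G e)) ` F) \<and>
     (\<forall>e1\<in>F. \<forall>e2\<in>F. head G e1 = head G e2 \<longrightarrow> e1 = e2)"

text \<open>Complex of directed trees, as its set of faces (vertex set = arcs G).\<close>
definition DT :: "('a,'b) pre_digraph \<Rightarrow> 'b set set" where
  "DT G = {F. F \<subseteq> arcs G \<and> directed_forest G F}"

definition facets :: "'x set set \<Rightarrow> 'x set set" where
  "facets \<Delta> = {F \<in> \<Delta>. \<forall>H\<in>\<Delta>. F \<subseteq> H \<longrightarrow> H = F}"

text \<open>Shellability; list index i stands for F_(i+1).\<close>
definition shellable :: "'x set set \<Rightarrow> bool" where
  "shellable \<Delta> \<longleftrightarrow> (\<exists>Fs. distinct Fs \<and> set Fs = facets \<Delta> \<and>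
     (\<forall>i k. i < k \<longrightarrow> k < length Fs \<longrightarrow>
        (\<exists>j<k. \<exists>e\<in>Fs ! k. Fs ! i \<inter> Fs ! k \<subseteq> Fs ! j \<inter> Fs ! k \<and>
                         Fs ! j \<inter> Fs ! k = Fs ! k - {e})))"

end

theory Submission
  imports Defs
begin

definition hinj :: "('a,'b) pre_digraph \<Rightarrow> 'b set \<Rightarrow> bool" where
  "hinj G F \<longleftrightarrow> (\<forall>e1\<in>F. \<forall>e2\<in>F. head G e1 = head G e2 \<longrightarrow> e1 = e2)"

lemma DT_char:
  assumes "acyclic (arcs_ends G)"
  shows "F \<in> DT G \<longleftrightarrow> F \<subseteq> arcs G \<and> hinj G F"
proof
  assume "F \<subseteq> arcs G \<and> hinj G F"
  moreover have "(\<lambda>e. (tail G e, head G e)) ` F \<subseteq> arcs_ends G"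
    using calculation by (auto simp: arcs_ends_conv)
  ultimately show "F \<in> DT G" using assms acyclic_subset
    by (auto simp: DT_def directed_forest_def hinj_def)
qed (auto simp: DT_def directed_forest_def hinj_def)

lemma facet_char:
  assumes "acyclic (arcs_ends G)"
  shows "F \<in> facets (DT G) \<longleftrightarrow> F \<subseteq> arcs G \<and> hinj G F \<and> (\<forall>x\<in>arcs G. \<exists>f\<in>F. head G f = head G x)"
proof
  assume F: "F \<in> facets (DT G)"
  hence F1: "F \<subseteq> arcs G" "hinj G F" using DT_char[OF assms] by (auto simp: facets_def)
  have "\<exists>f\<in>F. head G f = head G x" if x: "x \<in> arcs G" for x
  proof (rule ccontr)
    assume n: "\<not> ?thesis"
    have "insert x F \<in> DT G" using DT_char[OF assms] F1 x n by (auto simp: hinj_def)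
    hence "insert x F = F" using F by (auto simp: facets_def)
    thus False using n by auto
  qed
  thus "F \<subseteq> arcs G \<and> hinj G F \<and> (\<forall>x\<in>arcs G. \<exists>f\<in>F. head G f = head G x)" using F1 by auto
next
  assume F: "F \<subseteq> arcs G \<and> hinj G F \<and> (\<forall>x\<in>arcs G. \<exists>f\<in>F. head G f = head G x)"
  have "H = F" if "H \<in> DT G" "F \<subseteq> H" for H
  proof -
    have H: "H \<subseteq> arcs G" "hinj G H" using that DT_char[OF assms] by auto
    have "h \<in> F" if "h \<in> H" for h
      using F H \<open>F \<subseteq> H\<close> that unfolding hinj_def by blast
    thus ?thesis using \<open>F \<subseteq> H\<close> by auto
  qed
  thus "F \<in> facets (DT G)" using F DT_char[OF assms] by (auto simp: facets_def)
qed

lemma key: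
  fixes r :: "'b \<Rightarrow> nat"
  assumes fin: "finite (arcs G)" and r: "inj_on r (arcs G)"
    and A: "A \<subseteq> arcs G" "hinj G A" "\<forall>x\<in>arcs G. \<exists>f\<in>A. head G f = head G x"
    and B: "B \<subseteq> arcs G" "hinj G B" "\<forall>x\<in>arcs G. \<exists>f\<in>B. head G f = head G x"
    and ne: "A \<noteq> B" and W: "sum r A \<le> sum r B"
  shows "\<exists>e\<in>B-A. \<exists>a\<in>A-B. head G a = head G e \<and> r a < r e"
proof (rule ccontr)
  assume n: "\<not> ?thesis"
  have Ah: "\<And>x y. x \<in> A \<Longrightarrow> y \<in> A \<Longrightarrow> head G x = head G y \<Longrightarrow> x = y"
    using A(2) unfolding hinj_def by auto
  have Bh: "\<And>x y. x \<in> B \<Longrightarrow> y \<in> B \<Longrightarrow> head G x = head G y \<Longrightarrow> x = y"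
    using B(2) unfolding hinj_def by auto
  define \<phi> where "\<phi> e = (THE a. a \<in> A \<and> head G a = head G e)" for e
  have phi: "\<phi> e \<in> A \<and> head G (\<phi> e) = head G e" if ea: "e \<in> arcs G" for e
  proof -
    obtain a where a: "a \<in> A" "head G a = head G e" using A(3) ea by auto
    have "\<phi> e = a" unfolding \<phi>_def
    proof (rule the_equality)
      show "a \<in> A \<and> head G a = head G e" using a by simp
      fix y assume "y \<in> A \<and> head G y = head G e"
      thus "y = a" using a Ah[of y a] by simp
    qed
    thus ?thesis using a by auto
  qed
  have phiBA: "\<phi> e \<in> A - B" if e: "e \<in> B - A" for e
  proof -
    have p: "\<phi> e \<in> A" "head G (\<phi> e) = head G e" using phi[of e] e B(1) by auto
    have "\<phi> e \<noteq> e" using e p(1) by auto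
    hence "\<phi> e \<notin> B" using Bh[of "\<phi> e" e] e p(2) by auto
    thus ?thesis using p(1) by simp
  qed
  have inj: "inj_on \<phi> (B - A)"
  proof (rule inj_onI)
    fix x y assume xy: "x \<in> B - A" "y \<in> B - A" "\<phi> x = \<phi> y"
    have "head G (\<phi> x) = head G x" "head G (\<phi> y) = head G y"
      using phi[of x] phi[of y] xy(1,2) B(1) by auto
    hence "head G x = head G y" using xy(3) by simp
    thus "x = y" using Bh xy(1,2) by blast
  qed
  have surj: "A - B \<subseteq> \<phi> ` (B - A)"
  proof
    fix a assume a: "a \<in> A - B"
    have aA: "a \<in> arcs G" using a A(1) by auto
    obtain e where e: "e \<in> B" "head G e = head G a" using B(3) aA by blast
    have "e \<noteq> a" using a e by auto
    hence "e \<notin> A" using Ah[of e a] a e by auto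
    have eA: "e \<in> arcs G" using e B(1) by auto
    have "\<phi> e \<in> A" "head G (\<phi> e) = head G a" using phi[OF eA] e by auto
    hence "\<phi> e = a" using Ah[of "\<phi> e" a] a by auto
    thus "a \<in> \<phi> ` (B - A)" using e \<open>e \<notin> A\<close> by (intro image_eqI[of _ _ e]) auto
  qed
  have bij: "bij_betw \<phi> (B - A) (A - B)"
    unfolding bij_betw_def using inj surj phiBA by blast
  have BAne: "B - A \<noteq> {}"
  proof
    assume "B - A = {}"
    hence "A - B = {}" using surj by auto
    thus False using ne \<open>B - A = {}\<close> by auto
  qed
  have lt: "r e < r (\<phi> e)" if e: "e \<in> B - A" for e
  proof -
    have p: "\<phi> e \<in> A - B" "head G (\<phi> e) = head G e" using phiBA[OF e] phi[of e] e B(1) by auto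
    have "\<phi> e \<noteq> e" using p(1) e by auto
    hence "r (\<phi> e) \<noteq> r e"
      using r p(1) e A(1) B(1) inj_onD[of r "arcs G" "\<phi> e" e] by auto
    moreover have "\<not> r (\<phi> e) < r e" using n p e by blast
    ultimately show ?thesis by simp
  qed
  have finA: "finite A" "finite B" using fin A(1) B(1) finite_subset by auto
  have "sum r (B - A) < sum (\<lambda>e. r (\<phi> e)) (B - A)"
    using lt BAne finA by (intro sum_strict_mono) auto
  also have "\<dots> = sum r (A - B)" using sum.reindex_bij_betw[OF bij, of r] by simp
  finally have 1: "sum r (B - A) < sum r (A - B)" .
  have "sum r A = sum r (A - B) + sum r (A \<inter> B)"
    using sum.Int_Diff[OF finA(1), of r B] by simp
  moreover have "sum r B = sum r (B - A) + sum r (A \<inter> B)"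
    using sum.Int_Diff[OF finA(2), of r A] by (simp add: Int_commute)
  ultimately show False using 1 W by linarith
qed

theorem corollary2p10:
  fixes G :: "('a,'b) pre_digraph"
  assumes "fin_digraph G"
    and "acyclic (arcs_ends G)"
  shows "shellable (DT G)"
proof -
  have fin: "finite (arcs G)" using assms(1) fin_digraph.finite_arcs by blast
  obtain r :: "'b \<Rightarrow> nat" and n where "r ` arcs G = {i. i < n}" and r: "inj_on r (arcs G)"
    using finite_imp_inj_to_nat_seg[OF fin] by blast
  have "facets (DT G) \<subseteq> Pow (arcs G)" using facet_char[OF assms(2)] by auto
  hence "finite (facets (DT G))" using fin finite_subset by blast
  then obtain L where L: "set L = facets (DT G)" "distinct L" using finite_distinct_list by blast
  define Fs where "Fs = sort_key (sum r) L"
  have Fs: "distinct Fs" "set Fs = facets (DT G)" "sorted (map (sum r) Fs)"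
    using L by (auto simp: Fs_def distinct_sort)
  have "\<exists>j<k. \<exists>e\<in>Fs ! k. Fs ! i \<inter> Fs ! k \<subseteq> Fs ! j \<inter> Fs ! k \<and> Fs ! j \<inter> Fs ! k = Fs ! k - {e}"
    if ik: "i < k" "k < length Fs" for i k
  proof -
    define A where "A = Fs ! i"
    define B where "B = Fs ! k"
    have AB: "A \<in> facets (DT G)" "B \<in> facets (DT G)" using Fs(2) ik unfolding A_def B_def
      by (metis nth_mem order.strict_trans)+
    have ne: "A \<noteq> B" using Fs(1) ik unfolding A_def B_def by (simp add: nth_eq_iff_index_eq)
    have W: "sum r A \<le> sum r B" using Fs(3) ik unfolding A_def B_def sorted_iff_nth_mono_less by auto
    note A = AB(1)[unfolded facet_char[OF assms(2)]]
    note B = AB(2)[unfolded facet_char[OF assms(2)]]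
    obtain e a where e: "e \<in> B - A" and a: "a \<in> A - B" "head G a = head G e" "r a < r e"
      using key[OF fin r _ _ _ _ _ _ ne W] A B by blast
    define C where "C = insert a (B - {e})"
    have "C \<in> facets (DT G)" unfolding facet_char[OF assms(2)]
    proof (intro conjI)
      show "C \<subseteq> arcs G" using A B a unfolding C_def by auto
      show "hinj G C" using B a e unfolding C_def hinj_def by auto
      show "\<forall>x\<in>arcs G. \<exists>f\<in>C. head G f = head G x" using B a unfolding C_def by (metis insertCI insert_Diff_single insert_iff)
    qed
    then obtain j where j: "j < length Fs" "Fs ! j = C" using Fs(2) by (metis in_set_conv_nth)
    have finB: "finite B" using B fin finite_subset by blast
    have "sum r C = sum r (B - {e}) + r a" using finB a unfolding C_def by simp
    moreover have "sum r B = sum r (B - {e}) + r e" using sum.remove[OF finB, of e r] e by simp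
    ultimately have "sum r C < sum r B" using a by simp
    hence "j < k"
    proof (cases "j < k")
      case False
      hence "k \<le> j" by simp
      hence "sum r B \<le> sum r C"
      proof (cases "k = j")
        case True thus ?thesis using j unfolding B_def by simp
      next
        case False
        hence "k < j" using \<open>k \<le> j\<close> by simp
        thus ?thesis using Fs(3) j unfolding B_def sorted_iff_nth_mono_less by fastforce
      qed
      thus ?thesis using \<open>sum r C < sum r B\<close> by simp
    qed
    moreover have "A \<inter> B \<subseteq> C \<inter> B" "C \<inter> B = B - {e}" using e a unfolding C_def by auto
    ultimately show ?thesis using e j unfolding A_def B_def by blast
  qed
  hence "\<forall>i k. i < k \<longrightarrow> k < length Fs \<longrightarrow>
        (\<exists>j<k. \<exists>e\<in>Fs ! k. Fs ! i \<inter> Fs ! k \<subseteq> Fs ! j \<inter> Fs ! k \<and>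
                         Fs ! j \<inter> Fs ! k = Fs ! k - {e})" by blast
  thus ?thesis unfolding shellable_def using Fs(1,2) by (intro exI[of _ Fs]) simp
qed

end
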